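(* Let $k$ be a field. Every nondegenerate variety of representations of Lie algebras over $k$ is an IBN-variety.
   Context: A representation of a Lie algebra over $k$ is a two-sorted algebra ($\Gamma=\{1,2\}$): sort 1 is a Lie algebra $L$ over $k$ (operations $+,0,-$, a unary scalar multiplication by each $\lambda\in k$, and the bracket), sort 2 is a $k$-vector space $V$ (operations $+,0,-$ and a unary scalar multiplication by each $\lambda\in k$), and there is an action $\circ$ of type $(1,2;2)$ which is bilinear and satisfies $[a,b]\circ v=a\circ(b\circ v)-b\circ(a\circ v)$. A variety of representations of Lie algebras is a class of such representations defined by (two-sorted) identities. A two-sorted variety is nondegenerate if neither $x^{(1)}_1=x^{(1)}_2$ nor $x^{(2)}_1=x^{(2)}_2$ is an identity of it. It is an IBN-variety if for any free algebras $F(Y),F(Z)$ of the variety with finite free generating sets $Y=Y^{(1)}\uplus Y^{(2)}$, $Z=Z^{(1)}\uplus Z^{(2)}$ (split by sort), $F(Y)\cong F(Z)$ implies $|Y^{(1)}|=|Z^{(1)}|$ and $|Y^{(2)}|=|Z^{(2)}|$. *)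

theory Defs
  imports Main
begin

text \<open>Sort 1 (Lie algebra) terms: variables x^(1)_i, 0, +, -, scalar multiplication by each
  scalar, and the bracket.\<close>
datatype 'k tm1 =
    V1 nat
  | Zero1
  | Add1 "'k tm1" "'k tm1"
  | Neg1 "'k tm1"
  | Smul1 'k "'k tm1"
  | Br "'k tm1" "'k tm1"

text \<open>Sort 2 (vector space) terms: variables x^(2)_i, 0, +, -, scalar multiplication,
  and the action of type (1,2;2).\<close>
datatype 'k tm2 =
    V2 nat
  | Zero2
  | Add2 "'k tm2" "'k tm2"
  | Neg2 "'k tm2"
  | Smul2 'k "'k tm2"
  | Act "'k tm1" "'k tm2"

primrec vars1 :: "'k tm1 \<Rightarrow> nat set" where
  "vars1 (V1 i) = {i}"
| "vars1 Zero1 = {}"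
| "vars1 (Add1 a b) = vars1 a \<union> vars1 b"
| "vars1 (Neg1 a) = vars1 a"
| "vars1 (Smul1 c a) = vars1 a"
| "vars1 (Br a b) = vars1 a \<union> vars1 b"

primrec vars21 :: "'k tm2 \<Rightarrow> nat set" where
  "vars21 (V2 i) = {}"
| "vars21 Zero2 = {}"
| "vars21 (Add2 u v) = vars21 u \<union> vars21 v"
| "vars21 (Neg2 u) = vars21 u"
| "vars21 (Smul2 c u) = vars21 u"
| "vars21 (Act a u) = vars1 a \<union> vars21 u"

primrec vars22 :: "'k tm2 \<Rightarrow> nat set" where
  "vars22 (V2 i) = {i}"
| "vars22 Zero2 = {}"
| "vars22 (Add2 u v) = vars22 u \<union> vars22 v"
| "vars22 (Neg2 u) = vars22 u"
| "vars22 (Smul2 c u) = vars22 u"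
| "vars22 (Act a u) = vars22 u"

primrec sub1 :: "(nat \<Rightarrow> 'k tm1) \<Rightarrow> 'k tm1 \<Rightarrow> 'k tm1" where
  "sub1 \<sigma> (V1 i) = \<sigma> i"
| "sub1 \<sigma> Zero1 = Zero1"
| "sub1 \<sigma> (Add1 a b) = Add1 (sub1 \<sigma> a) (sub1 \<sigma> b)"
| "sub1 \<sigma> (Neg1 a) = Neg1 (sub1 \<sigma> a)"
| "sub1 \<sigma> (Smul1 c a) = Smul1 c (sub1 \<sigma> a)"
| "sub1 \<sigma> (Br a b) = Br (sub1 \<sigma> a) (sub1 \<sigma> b)"

primrec sub2 :: "(nat \<Rightarrow> 'k tm1) \<Rightarrow> (nat \<Rightarrow> 'k tm2) \<Rightarrow> 'k tm2 \<Rightarrow> 'k tm2" where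
  "sub2 \<sigma> \<tau> (V2 i) = \<tau> i"
| "sub2 \<sigma> \<tau> Zero2 = Zero2"
| "sub2 \<sigma> \<tau> (Add2 u v) = Add2 (sub2 \<sigma> \<tau> u) (sub2 \<sigma> \<tau> v)"
| "sub2 \<sigma> \<tau> (Neg2 u) = Neg2 (sub2 \<sigma> \<tau> u)"
| "sub2 \<sigma> \<tau> (Smul2 c u) = Smul2 c (sub2 \<sigma> \<tau> u)"
| "sub2 \<sigma> \<tau> (Act a u) = Act (sub1 \<sigma> a) (sub2 \<sigma> \<tau> u)"

text \<open>A variety of representations is given by a set of defining identities
  E1 (between sort-1 terms) and E2 (between sort-2 terms).
  The identities of the variety are the equational consequences of the axioms of
  representations of Lie algebras together with E1, E2, i.e. the least fully invariant
  congruence on the two-sorted term algebra containing them (Birkhoff; both sorts have a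
  constant, so carriers are nonempty and two-sorted equational logic is complete).\<close>
inductive ident1 :: "('k::field tm1 \<times> 'k tm1) set \<Rightarrow> ('k tm2 \<times> 'k tm2) set \<Rightarrow> 'k tm1 \<Rightarrow> 'k tm1 \<Rightarrow> bool"
  and ident2 :: "('k::field tm1 \<times> 'k tm1) set \<Rightarrow> ('k tm2 \<times> 'k tm2) set \<Rightarrow> 'k tm2 \<Rightarrow> 'k tm2 \<Rightarrow> bool"
  for E1 E2
where
  hyp1: "(s, t) \<in> E1 \<Longrightarrow> ident1 E1 E2 (sub1 \<sigma> s) (sub1 \<sigma> t)"
| hyp2: "(s, t) \<in> E2 \<Longrightarrow> ident2 E1 E2 (sub2 \<sigma> \<tau> s) (sub2 \<sigma> \<tau> t)"
| refl1: "ident1 E1 E2 a a"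
| sym1: "ident1 E1 E2 a b \<Longrightarrow> ident1 E1 E2 b a"
| trans1: "ident1 E1 E2 a b \<Longrightarrow> ident1 E1 E2 b c \<Longrightarrow> ident1 E1 E2 a c"
| refl2: "ident2 E1 E2 u u"
| sym2: "ident2 E1 E2 u v \<Longrightarrow> ident2 E1 E2 v u"
| trans2: "ident2 E1 E2 u v \<Longrightarrow> ident2 E1 E2 v w \<Longrightarrow> ident2 E1 E2 u w"
| cAdd1: "ident1 E1 E2 a a' \<Longrightarrow> ident1 E1 E2 b b' \<Longrightarrow> ident1 E1 E2 (Add1 a b) (Add1 a' b')"
| cNeg1: "ident1 E1 E2 a a' \<Longrightarrow> ident1 E1 E2 (Neg1 a) (Neg1 a')"
| cSmul1: "ident1 E1 E2 a a' \<Longrightarrow> ident1 E1 E2 (Smul1 c a) (Smul1 c a')"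
| cBr: "ident1 E1 E2 a a' \<Longrightarrow> ident1 E1 E2 b b' \<Longrightarrow> ident1 E1 E2 (Br a b) (Br a' b')"
| cAdd2: "ident2 E1 E2 u u' \<Longrightarrow> ident2 E1 E2 v v' \<Longrightarrow> ident2 E1 E2 (Add2 u v) (Add2 u' v')"
| cNeg2: "ident2 E1 E2 u u' \<Longrightarrow> ident2 E1 E2 (Neg2 u) (Neg2 u')"
| cSmul2: "ident2 E1 E2 u u' \<Longrightarrow> ident2 E1 E2 (Smul2 c u) (Smul2 c u')"
| cAct: "ident1 E1 E2 a a' \<Longrightarrow> ident2 E1 E2 u u' \<Longrightarrow> ident2 E1 E2 (Act a u) (Act a' u')"
| as1: "ident1 E1 E2 (Add1 (Add1 a b) c) (Add1 a (Add1 b c))"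
| co1: "ident1 E1 E2 (Add1 a b) (Add1 b a)"
| ze1: "ident1 E1 E2 (Add1 a Zero1) a"
| ng1: "ident1 E1 E2 (Add1 a (Neg1 a)) Zero1"
| sd1: "ident1 E1 E2 (Smul1 c (Add1 a b)) (Add1 (Smul1 c a) (Smul1 c b))"
| sa1: "ident1 E1 E2 (Smul1 (c + d) a) (Add1 (Smul1 c a) (Smul1 d a))"
| sm1: "ident1 E1 E2 (Smul1 (c * d) a) (Smul1 c (Smul1 d a))"
| so1: "ident1 E1 E2 (Smul1 1 a) a"
| bl1: "ident1 E1 E2 (Br (Add1 a b) c) (Add1 (Br a c) (Br b c))"
| bl2: "ident1 E1 E2 (Br a (Add1 b c)) (Add1 (Br a b) (Br a c))"
| bl3: "ident1 E1 E2 (Br (Smul1 d a) b) (Smul1 d (Br a b))"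
| bl4: "ident1 E1 E2 (Br a (Smul1 d b)) (Smul1 d (Br a b))"
| alt: "ident1 E1 E2 (Br a a) Zero1"
| jac: "ident1 E1 E2 (Add1 (Add1 (Br a (Br b c)) (Br b (Br c a))) (Br c (Br a b))) Zero1"
| as2: "ident2 E1 E2 (Add2 (Add2 u v) w) (Add2 u (Add2 v w))"
| co2: "ident2 E1 E2 (Add2 u v) (Add2 v u)"
| ze2: "ident2 E1 E2 (Add2 u Zero2) u"
| ng2: "ident2 E1 E2 (Add2 u (Neg2 u)) Zero2"
| sd2: "ident2 E1 E2 (Smul2 c (Add2 u v)) (Add2 (Smul2 c u) (Smul2 c v))"
| sa2: "ident2 E1 E2 (Smul2 (c + d) u) (Add2 (Smul2 c u) (Smul2 d u))"
| sm2: "ident2 E1 E2 (Smul2 (c * d) u) (Smul2 c (Smul2 d u))"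
| so2: "ident2 E1 E2 (Smul2 1 u) u"
| al1: "ident2 E1 E2 (Act (Add1 a b) u) (Add2 (Act a u) (Act b u))"
| al2: "ident2 E1 E2 (Act a (Add2 u v)) (Add2 (Act a u) (Act a v))"
| al3: "ident2 E1 E2 (Act (Smul1 d a) u) (Smul2 d (Act a u))"
| al4: "ident2 E1 E2 (Act a (Smul2 d u)) (Smul2 d (Act a u))"
| rep: "ident2 E1 E2 (Act (Br a b) u) (Add2 (Act a (Act b u)) (Neg2 (Act b (Act a u))))"

definition nondegenerate :: "('k::field tm1 \<times> 'k tm1) set \<Rightarrow> ('k tm2 \<times> 'k tm2) set \<Rightarrow> bool" where
  "nondegenerate E1 E2 \<longleftrightarrow>
     \<not> ident1 E1 E2 (V1 0) (V1 1) \<and> \<not> ident2 E1 E2 (V2 0) (V2 1)"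

record ('k, 'a, 'b) rep_alg =
  car1 :: "'a set"
  car2 :: "'b set"
  zero1 :: 'a
  add1 :: "'a \<Rightarrow> 'a \<Rightarrow> 'a"
  neg1 :: "'a \<Rightarrow> 'a"
  smul1 :: "'k \<Rightarrow> 'a \<Rightarrow> 'a"
  brk :: "'a \<Rightarrow> 'a \<Rightarrow> 'a"
  zero2 :: 'b
  add2 :: "'b \<Rightarrow> 'b \<Rightarrow> 'b"
  neg2 :: "'b \<Rightarrow> 'b"
  smul2 :: "'k \<Rightarrow> 'b \<Rightarrow> 'b"
  act :: "'a \<Rightarrow> 'b \<Rightarrow> 'b"

definition rep_iso :: "('k, 'a, 'b) rep_alg \<Rightarrow> ('k, 'c, 'd) rep_alg \<Rightarrow> bool" where
  "rep_iso A B \<longleftrightarrow> (\<exists>h1 h2.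
     bij_betw h1 (car1 A) (car1 B) \<and> bij_betw h2 (car2 A) (car2 B) \<and>
     h1 (zero1 A) = zero1 B \<and> h2 (zero2 A) = zero2 B \<and>
     (\<forall>x\<in>car1 A. \<forall>y\<in>car1 A. h1 (add1 A x y) = add1 B (h1 x) (h1 y)) \<and>
     (\<forall>x\<in>car1 A. h1 (neg1 A x) = neg1 B (h1 x)) \<and>
     (\<forall>c. \<forall>x\<in>car1 A. h1 (smul1 A c x) = smul1 B c (h1 x)) \<and>
     (\<forall>x\<in>car1 A. \<forall>y\<in>car1 A. h1 (brk A x y) = brk B (h1 x) (h1 y)) \<and>
     (\<forall>u\<in>car2 A. \<forall>v\<in>car2 A. h2 (add2 A u v) = add2 B (h2 u) (h2 v)) \<and>
     (\<forall>u\<in>car2 A. h2 (neg2 A u) = neg2 B (h2 u)) \<and>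
     (\<forall>c. \<forall>u\<in>car2 A. h2 (smul2 A c u) = smul2 B c (h2 u)) \<and>
     (\<forall>x\<in>car1 A. \<forall>u\<in>car2 A. h2 (act A x u) = act B (h1 x) (h2 u)))"

text \<open>The free algebra of the variety on a free generating set with m generators of sort 1
  (x^(1)_0..x^(1)_(m-1)) and n generators of sort 2 (x^(2)_0..x^(2)_(n-1)):
  terms in these variables modulo the identities of the variety.\<close>
definition cls1 where "cls1 E1 E2 t = {s. ident1 E1 E2 s t}"
definition cls2 where "cls2 E1 E2 t = {s. ident2 E1 E2 s t}"

definition free_alg :: "('k::field tm1 \<times> 'k tm1) set \<Rightarrow> ('k tm2 \<times> 'k tm2) set \<Rightarrow> nat \<Rightarrow> nat
    \<Rightarrow> ('k, 'k tm1 set, 'k tm2 set) rep_alg" where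
  "free_alg E1 E2 m n =
    \<lparr> car1 = {cls1 E1 E2 t | t. vars1 t \<subseteq> {..<m}},
      car2 = {cls2 E1 E2 t | t. vars21 t \<subseteq> {..<m} \<and> vars22 t \<subseteq> {..<n}},
      zero1 = cls1 E1 E2 Zero1,
      add1 = (\<lambda>X Y. cls1 E1 E2 (Add1 (SOME x. x \<in> X) (SOME y. y \<in> Y))),
      neg1 = (\<lambda>X. cls1 E1 E2 (Neg1 (SOME x. x \<in> X))),
      smul1 = (\<lambda>c X. cls1 E1 E2 (Smul1 c (SOME x. x \<in> X))),
      brk = (\<lambda>X Y. cls1 E1 E2 (Br (SOME x. x \<in> X) (SOME y. y \<in> Y))),
      zero2 = cls2 E1 E2 Zero2,
      add2 = (\<lambda>U W. cls2 E1 E2 (Add2 (SOME u. u \<in> U) (SOME w. w \<in> W))),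
      neg2 = (\<lambda>U. cls2 E1 E2 (Neg2 (SOME u. u \<in> U))),
      smul2 = (\<lambda>c U. cls2 E1 E2 (Smul2 c (SOME u. u \<in> U))),
      act = (\<lambda>X U. cls2 E1 E2 (Act (SOME x. x \<in> X) (SOME u. u \<in> U))) \<rparr>"

definition IBN_variety :: "('k::field tm1 \<times> 'k tm1) set \<Rightarrow> ('k tm2 \<times> 'k tm2) set \<Rightarrow> bool" where
  "IBN_variety E1 E2 \<longleftrightarrow>
     (\<forall>m n m' n'. rep_iso (free_alg E1 E2 m n) (free_alg E1 E2 m' n') \<longrightarrow> m = m' \<and> n = n')"

end

theory Submission
  imports Defs "Jordan_Normal_Form.Determinant"
begin


context fixes E1 :: "('k::field tm1 \<times> 'k tm1) set" and E2 :: "('k tm2 \<times> 'k tm2) set"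
begin

lemma tr1[trans]: "ident1 E1 E2 a b \<Longrightarrow> ident1 E1 E2 b c \<Longrightarrow> ident1 E1 E2 a c"
  by (rule trans1)
lemma tr2[trans]: "ident2 E1 E2 a b \<Longrightarrow> ident2 E1 E2 b c \<Longrightarrow> ident2 E1 E2 a c"
  by (rule trans2)

lemma smul0_1: "ident1 E1 E2 (Smul1 0 a) Zero1"
proof -
  let ?z = "Smul1 0 a"
  have 1: "ident1 E1 E2 ?z (Add1 ?z ?z)" using sa1[of E1 E2 0 0 a] by simp
  have "ident1 E1 E2 Zero1 (Add1 ?z (Neg1 ?z))" by (rule sym1, rule ng1)
  also have "ident1 E1 E2 \<dots> (Add1 (Add1 ?z ?z) (Neg1 ?z))" by (rule cAdd1[OF 1 refl1])
  also have "ident1 E1 E2 \<dots> (Add1 ?z (Add1 ?z (Neg1 ?z)))" by (rule as1)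
  also have "ident1 E1 E2 \<dots> (Add1 ?z Zero1)" by (rule cAdd1[OF refl1 ng1])
  also have "ident1 E1 E2 \<dots> ?z" by (rule ze1)
  finally show ?thesis by (rule sym1)
qed

lemma smul0_2: "ident2 E1 E2 (Smul2 0 a) Zero2"
proof -
  let ?z = "Smul2 0 a"
  have 1: "ident2 E1 E2 ?z (Add2 ?z ?z)" using sa2[of E1 E2 0 0 a] by simp
  have "ident2 E1 E2 Zero2 (Add2 ?z (Neg2 ?z))" by (rule sym2, rule ng2)
  also have "ident2 E1 E2 \<dots> (Add2 (Add2 ?z ?z) (Neg2 ?z))" by (rule cAdd2[OF 1 refl2])
  also have "ident2 E1 E2 \<dots> (Add2 ?z (Add2 ?z (Neg2 ?z)))" by (rule as2)
  also have "ident2 E1 E2 \<dots> (Add2 ?z Zero2)" by (rule cAdd2[OF refl2 ng2])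
  also have "ident2 E1 E2 \<dots> ?z" by (rule ze2)
  finally show ?thesis by (rule sym2)
qed

lemma smulz_1: "ident1 E1 E2 (Smul1 d Zero1) Zero1"
proof -
  have "ident1 E1 E2 (Smul1 d Zero1) (Smul1 d (Smul1 0 Zero1))" by (rule cSmul1, rule sym1, rule smul0_1)
  also have "ident1 E1 E2 \<dots> (Smul1 (d*0) Zero1)" by (rule sym1, rule sm1)
  also have "ident1 E1 E2 \<dots> Zero1" using smul0_1 by simp
  finally show ?thesis .
qed

lemma smulz_2: "ident2 E1 E2 (Smul2 d Zero2) Zero2"
proof -
  have "ident2 E1 E2 (Smul2 d Zero2) (Smul2 d (Smul2 0 Zero2))" by (rule cSmul2, rule sym2, rule smul0_2)
  also have "ident2 E1 E2 \<dots> (Smul2 (d*0) Zero2)" by (rule sym2, rule sm2)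
  also have "ident2 E1 E2 \<dots> Zero2" using smul0_2 by simp
  finally show ?thesis .
qed

lemma negsm_1: "ident1 E1 E2 (Neg1 (Smul1 c x)) (Smul1 (-c) x)"
proof -
  let ?y = "Smul1 c x" and ?w = "Smul1 (-c) x"
  have yw: "ident1 E1 E2 (Add1 ?y ?w) Zero1"
  proof -
    have "ident1 E1 E2 (Add1 ?y ?w) (Smul1 (c + -c) x)" by (rule sym1, rule sa1)
    also have "ident1 E1 E2 \<dots> Zero1" using smul0_1 by simp
    finally show ?thesis .
  qed
  have "ident1 E1 E2 (Neg1 ?y) (Add1 (Neg1 ?y) Zero1)" by (rule sym1, rule ze1)
  also have "ident1 E1 E2 \<dots> (Add1 (Neg1 ?y) (Add1 ?y ?w))" by (rule cAdd1[OF refl1 sym1[OF yw]])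
  also have "ident1 E1 E2 \<dots> (Add1 (Add1 (Neg1 ?y) ?y) ?w)" by (rule sym1, rule as1)
  also have "ident1 E1 E2 \<dots> (Add1 (Add1 ?y (Neg1 ?y)) ?w)" by (rule cAdd1[OF co1 refl1])
  also have "ident1 E1 E2 \<dots> (Add1 Zero1 ?w)" by (rule cAdd1[OF ng1 refl1])
  also have "ident1 E1 E2 \<dots> (Add1 ?w Zero1)" by (rule co1)
  also have "ident1 E1 E2 \<dots> ?w" by (rule ze1)
  finally show ?thesis .
qed

lemma negsm_2: "ident2 E1 E2 (Neg2 (Smul2 c x)) (Smul2 (-c) x)"
proof -
  let ?y = "Smul2 c x" and ?w = "Smul2 (-c) x"
  have yw: "ident2 E1 E2 (Add2 ?y ?w) Zero2"
  proof -
    have "ident2 E1 E2 (Add2 ?y ?w) (Smul2 (c + -c) x)" by (rule sym2, rule sa2)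
    also have "ident2 E1 E2 \<dots> Zero2" using smul0_2 by simp
    finally show ?thesis .
  qed
  have "ident2 E1 E2 (Neg2 ?y) (Add2 (Neg2 ?y) Zero2)" by (rule sym2, rule ze2)
  also have "ident2 E1 E2 \<dots> (Add2 (Neg2 ?y) (Add2 ?y ?w))" by (rule cAdd2[OF refl2 sym2[OF yw]])
  also have "ident2 E1 E2 \<dots> (Add2 (Add2 (Neg2 ?y) ?y) ?w)" by (rule sym2, rule as2)
  also have "ident2 E1 E2 \<dots> (Add2 (Add2 ?y (Neg2 ?y)) ?w)" by (rule cAdd2[OF co2 refl2])
  also have "ident2 E1 E2 \<dots> (Add2 Zero2 ?w)" by (rule cAdd2[OF ng2 refl2])
  also have "ident2 E1 E2 \<dots> (Add2 ?w Zero2)" by (rule co2)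
  also have "ident2 E1 E2 \<dots> ?w" by (rule ze2)
  finally show ?thesis .
qed

lemma cancel_1:
  assumes H: "ident1 E1 E2 (Smul1 c y) (Smul1 d y)" and cd: "c \<noteq> d"
  shows "ident1 E1 E2 y Zero1"
proof -
  have z: "ident1 E1 E2 (Smul1 (c - d) y) Zero1"
  proof -
    have "ident1 E1 E2 (Smul1 (c - d) y) (Smul1 (c + -d) y)" by (simp add: refl1)
    also have "ident1 E1 E2 \<dots> (Add1 (Smul1 c y) (Smul1 (-d) y))" by (rule sa1)
    also have "ident1 E1 E2 \<dots> (Add1 (Smul1 d y) (Smul1 (-d) y))" by (rule cAdd1[OF H refl1])
    also have "ident1 E1 E2 \<dots> (Smul1 (d + -d) y)" by (rule sym1, rule sa1)
    also have "ident1 E1 E2 \<dots> Zero1" using smul0_1 by simp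
    finally show ?thesis .
  qed
  have "ident1 E1 E2 y (Smul1 1 y)" by (rule sym1, rule so1)
  also have "ident1 E1 E2 \<dots> (Smul1 (inverse (c-d) * (c - d)) y)" using cd by (simp add: refl1)
  also have "ident1 E1 E2 \<dots> (Smul1 (inverse (c-d)) (Smul1 (c - d) y))" by (rule sm1)
  also have "ident1 E1 E2 \<dots> (Smul1 (inverse (c-d)) Zero1)" by (rule cSmul1[OF z])
  also have "ident1 E1 E2 \<dots> Zero1" by (rule smulz_1)
  finally show ?thesis .
qed

lemma cancel_2:
  assumes H: "ident2 E1 E2 (Smul2 c y) (Smul2 d y)" and cd: "c \<noteq> d"
  shows "ident2 E1 E2 y Zero2"
proof -
  have z: "ident2 E1 E2 (Smul2 (c - d) y) Zero2"
  proof -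
    have "ident2 E1 E2 (Smul2 (c - d) y) (Smul2 (c + -d) y)" by (simp add: refl2)
    also have "ident2 E1 E2 \<dots> (Add2 (Smul2 c y) (Smul2 (-d) y))" by (rule sa2)
    also have "ident2 E1 E2 \<dots> (Add2 (Smul2 d y) (Smul2 (-d) y))" by (rule cAdd2[OF H refl2])
    also have "ident2 E1 E2 \<dots> (Smul2 (d + -d) y)" by (rule sym2, rule sa2)
    also have "ident2 E1 E2 \<dots> Zero2" using smul0_2 by simp
    finally show ?thesis .
  qed
  have "ident2 E1 E2 y (Smul2 1 y)" by (rule sym2, rule so2)
  also have "ident2 E1 E2 \<dots> (Smul2 (inverse (c-d) * (c - d)) y)" using cd by (simp add: refl2)
  also have "ident2 E1 E2 \<dots> (Smul2 (inverse (c-d)) (Smul2 (c - d) y))" by (rule sm2)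
  also have "ident2 E1 E2 \<dots> (Smul2 (inverse (c-d)) Zero2)" by (rule cSmul2[OF z])
  also have "ident2 E1 E2 \<dots> Zero2" by (rule smulz_2)
  finally show ?thesis .
qed

end


primrec coef1 :: "'k::field tm1 \<Rightarrow> nat \<Rightarrow> 'k" where
  "coef1 (V1 i) = (\<lambda>j. if i = j then 1 else 0)"
| "coef1 Zero1 = (\<lambda>j. 0)"
| "coef1 (Add1 a b) = (\<lambda>j. coef1 a j + coef1 b j)"
| "coef1 (Neg1 a) = (\<lambda>j. - coef1 a j)"
| "coef1 (Smul1 c a) = (\<lambda>j. c * coef1 a j)"
| "coef1 (Br a b) = (\<lambda>j. 0)"

primrec coef2 :: "'k::field tm2 \<Rightarrow> nat \<Rightarrow> 'k" where
  "coef2 (V2 i) = (\<lambda>j. if i = j then 1 else 0)"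
| "coef2 Zero2 = (\<lambda>j. 0)"
| "coef2 (Add2 a b) = (\<lambda>j. coef2 a j + coef2 b j)"
| "coef2 (Neg2 a) = (\<lambda>j. - coef2 a j)"
| "coef2 (Smul2 c a) = (\<lambda>j. c * coef2 a j)"
| "coef2 (Act a u) = (\<lambda>j. 0)"

lemma fin_vars1[simp]: "finite (vars1 t)" by (induction t) auto
lemma fin_vars22[simp]: "finite (vars22 t)" by (induction t) auto

lemma sum_delta_mul: "finite S \<Longrightarrow> x \<in> S \<Longrightarrow> (\<Sum>i\<in>S. (if x = i then 1 else 0) * f i) = (f x :: 'k::field)"
proof -
  assume "finite S" "x \<in> S"
  have "(\<Sum>i\<in>S. (if x = i then 1 else 0) * f i) = (\<Sum>i\<in>S. if x = i then f i else 0)"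
    by (rule sum.cong) auto
  also have "\<dots> = f x" using \<open>finite S\<close> \<open>x \<in> S\<close> by (simp add: sum.delta sum.delta')
  finally show ?thesis .
qed

lemma coef1_sub: "finite S \<Longrightarrow> vars1 s \<subseteq> S \<Longrightarrow>
   coef1 (sub1 \<sigma> s) j = (\<Sum>i\<in>S. coef1 s i * coef1 (\<sigma> i) j)"
  by (induction s) (auto simp: sum.distrib distrib_right sum_negf sum_distrib_left mult.assoc sum_delta_mul)

lemma coef2_sub: "finite S \<Longrightarrow> vars22 s \<subseteq> S \<Longrightarrow>
   coef2 (sub2 \<sigma> \<tau> s) j = (\<Sum>i\<in>S. coef2 s i * coef2 (\<tau> i) j)"
  by (induction s) (auto simp: sum.distrib distrib_right sum_negf sum_distrib_left mult.assoc sum_delta_mul)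

context fixes E1 :: "('k::field tm1 \<times> 'k tm1) set" and E2 :: "('k tm2 \<times> 'k tm2) set"
begin

lemma N1: "ident1 E1 E2 (sub1 (\<lambda>i. if i = j then y else Zero1) u) (Smul1 (coef1 u j) y)"
proof (induction u)
  case (V1 i)
  show ?case
  proof (cases "i = j")
    case True thus ?thesis by (simp add: sym1[OF so1])
  next
    case False thus ?thesis by (simp add: sym1[OF smul0_1])
  qed
next
  case Zero1 show ?case by (simp, rule sym1, rule smul0_1)
next
  case (Add1 a b)
  have "ident1 E1 E2 (sub1 (\<lambda>i. if i = j then y else Zero1) (Add1 a b))
     (Add1 (Smul1 (coef1 a j) y) (Smul1 (coef1 b j) y))" using Add1 by (simp add: cAdd1)
  also have "ident1 E1 E2 \<dots> (Smul1 (coef1 (Add1 a b) j) y)" by (simp, rule sym1, rule sa1)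
  finally show ?case .
next
  case (Neg1 a)
  have "ident1 E1 E2 (sub1 (\<lambda>i. if i = j then y else Zero1) (Neg1 a))
     (Neg1 (Smul1 (coef1 a j) y))" using Neg1 by (simp add: cNeg1)
  also have "ident1 E1 E2 \<dots> (Smul1 (coef1 (Neg1 a) j) y)" by (simp, rule negsm_1)
  finally show ?case .
next
  case (Smul1 c a)
  have "ident1 E1 E2 (sub1 (\<lambda>i. if i = j then y else Zero1) (Smul1 c a))
     (Smul1 c (Smul1 (coef1 a j) y))" using Smul1 by (simp add: cSmul1)
  also have "ident1 E1 E2 \<dots> (Smul1 (coef1 (Smul1 c a) j) y)" by (simp, rule sym1, rule sm1)
  finally show ?case .
next
  case (Br a b)
  let ?c = "coef1 a j" and ?d = "coef1 b j"
  have "ident1 E1 E2 (sub1 (\<lambda>i. if i = j then y else Zero1) (Br a b))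
     (Br (Smul1 ?c y) (Smul1 ?d y))" using Br by (simp add: cBr)
  also have "ident1 E1 E2 \<dots> (Smul1 ?c (Br y (Smul1 ?d y)))" by (rule bl3)
  also have "ident1 E1 E2 \<dots> (Smul1 ?c (Smul1 ?d (Br y y)))" by (rule cSmul1, rule bl4)
  also have "ident1 E1 E2 \<dots> (Smul1 ?c (Smul1 ?d Zero1))" by (rule cSmul1, rule cSmul1, rule alt)
  also have "ident1 E1 E2 \<dots> (Smul1 ?c Zero1)" by (rule cSmul1, rule smulz_1)
  also have "ident1 E1 E2 \<dots> Zero1" by (rule smulz_1)
  also have "ident1 E1 E2 \<dots> (Smul1 (coef1 (Br a b) j) y)" by (simp, rule sym1, rule smul0_1)
  finally show ?case .
qed

lemma Z1: "ident1 E1 E2 (sub1 (\<lambda>i. Zero1) u) Zero1"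
proof -
  have "ident1 E1 E2 (sub1 (\<lambda>i. if i = 0 then Zero1 else Zero1) u) (Smul1 (coef1 u 0) Zero1)"
    by (rule N1)
  also have "ident1 E1 E2 \<dots> Zero1" by (rule smulz_1)
  finally show ?thesis by simp
qed

lemma actz: "ident2 E1 E2 (Act a u) Zero2" if "ident1 E1 E2 a Zero1"
proof -
  have "ident2 E1 E2 (Act a u) (Act (Smul1 0 Zero1) u)"
    by (rule cAct[OF _ refl2], rule trans1[OF that], rule sym1, rule smul0_1)
  also have "ident2 E1 E2 \<dots> (Smul2 0 (Act Zero1 u))" by (rule al3)
  also have "ident2 E1 E2 \<dots> Zero2" by (rule smul0_2)
  finally show ?thesis .
qed

lemma N2: "ident2 E1 E2 (sub2 (\<lambda>i. Zero1) (\<lambda>i. if i = j then y else Zero2) u) (Smul2 (coef2 u j) y)"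
proof (induction u)
  case (V2 i)
  show ?case
  proof (cases "i = j")
    case True thus ?thesis by (simp add: sym2[OF so2])
  next
    case False thus ?thesis by (simp add: sym2[OF smul0_2])
  qed
next
  case Zero2 show ?case by (simp, rule sym2, rule smul0_2)
next
  case (Add2 a b)
  have "ident2 E1 E2 (sub2 (\<lambda>i. Zero1) (\<lambda>i. if i = j then y else Zero2) (Add2 a b))
     (Add2 (Smul2 (coef2 a j) y) (Smul2 (coef2 b j) y))" using Add2 by (simp add: cAdd2)
  also have "ident2 E1 E2 \<dots> (Smul2 (coef2 (Add2 a b) j) y)" by (simp, rule sym2, rule sa2)
  finally show ?case .
next
  case (Neg2 a)
  have "ident2 E1 E2 (sub2 (\<lambda>i. Zero1) (\<lambda>i. if i = j then y else Zero2) (Neg2 a))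
     (Neg2 (Smul2 (coef2 a j) y))" using Neg2 by (simp add: cNeg2)
  also have "ident2 E1 E2 \<dots> (Smul2 (coef2 (Neg2 a) j) y)" by (simp, rule negsm_2)
  finally show ?case .
next
  case (Smul2 c a)
  have "ident2 E1 E2 (sub2 (\<lambda>i. Zero1) (\<lambda>i. if i = j then y else Zero2) (Smul2 c a))
     (Smul2 c (Smul2 (coef2 a j) y))" using Smul2 by (simp add: cSmul2)
  also have "ident2 E1 E2 \<dots> (Smul2 (coef2 (Smul2 c a) j) y)" by (simp, rule sym2, rule sm2)
  finally show ?case .
next
  case (Act a u)
  have "ident2 E1 E2 (sub2 (\<lambda>i. Zero1) (\<lambda>i. if i = j then y else Zero2) (Act a u)) Zero2"
    by (simp, rule actz, rule Z1)
  also have "ident2 E1 E2 \<dots> (Smul2 (coef2 (Act a u) j) y)" by (simp, rule sym2, rule smul0_2)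
  finally show ?case .
qed

lemma E1_valid:
  assumes nd: "nondegenerate E1 E2" and st: "(s, t) \<in> E1"
  shows "coef1 s = coef1 t"
proof (rule ccontr)
  assume "coef1 s \<noteq> coef1 t"
  then obtain j where j: "coef1 s j \<noteq> coef1 t j" by auto
  have k: "ident1 E1 E2 y Zero1" for y
    by (rule cancel_1[OF _ j], rule trans1[OF sym1[OF N1]], rule trans1[OF hyp1[OF st] N1])
  have "ident1 E1 E2 (V1 0) (V1 1)" by (rule trans1[OF k sym1[OF k]])
  thus False using nd unfolding nondegenerate_def by simp
qed

lemma E2_valid:
  assumes nd: "nondegenerate E1 E2" and st: "(s, t) \<in> E2"
  shows "coef2 s = coef2 t"
proof (rule ccontr)
  assume "coef2 s \<noteq> coef2 t"
  then obtain j where j: "coef2 s j \<noteq> coef2 t j" by auto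
  have k: "ident2 E1 E2 y Zero2" for y
    by (rule cancel_2[OF _ j], rule trans2[OF sym2[OF N2]], rule trans2[OF hyp2[OF st] N2])
  have "ident2 E1 E2 (V2 0) (V2 1)" by (rule trans2[OF k sym2[OF k]])
  thus False using nd unfolding nondegenerate_def by simp
qed

lemma coef_inv:
  assumes nd: "nondegenerate E1 E2"
  shows "(ident1 E1 E2 a b \<longrightarrow> coef1 a = coef1 b) \<and> (ident2 E1 E2 u v \<longrightarrow> coef2 u = coef2 v)"
proof -
  have "ident1 E1 E2 a b \<Longrightarrow> coef1 a = coef1 b" and "ident2 E1 E2 u v \<Longrightarrow> coef2 u = coef2 v"
  proof (induction rule: ident1_ident2.inducts)
    case (hyp1 s t \<sigma>)
    have e: "coef1 s = coef1 t" by (rule E1_valid[OF nd hyp1])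
    show ?case
    proof
      fix j
      show "coef1 (sub1 \<sigma> s) j = coef1 (sub1 \<sigma> t) j"
        using coef1_sub[of "vars1 s \<union> vars1 t" s \<sigma> j] coef1_sub[of "vars1 s \<union> vars1 t" t \<sigma> j] e
        by simp
    qed
  next
    case (hyp2 s t \<sigma> \<tau>)
    have e: "coef2 s = coef2 t" by (rule E2_valid[OF nd hyp2])
    show ?case
    proof
      fix j
      show "coef2 (sub2 \<sigma> \<tau> s) j = coef2 (sub2 \<sigma> \<tau> t) j"
        using coef2_sub[of "vars22 s \<union> vars22 t" s \<sigma> \<tau> j] coef2_sub[of "vars22 s \<union> vars22 t" t \<sigma> \<tau> j] e
        by simp
    qed
  qed (auto simp: algebra_simps)
  thus ?thesis by simp
qed

end


definition Coef1 :: "'k::field tm1 set \<Rightarrow> nat \<Rightarrow> 'k" where "Coef1 X = coef1 (SOME x. x \<in> X)"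
definition Coef2 :: "'k::field tm2 set \<Rightarrow> nat \<Rightarrow> 'k" where "Coef2 X = coef2 (SOME x. x \<in> X)"

definition ishom :: "('k, 'a, 'b) rep_alg \<Rightarrow> ('k, 'c, 'd) rep_alg \<Rightarrow> ('a \<Rightarrow> 'c) \<Rightarrow> ('b \<Rightarrow> 'd) \<Rightarrow> bool" where
  "ishom A B h1 h2 \<longleftrightarrow>
     h1 (zero1 A) = zero1 B \<and> h2 (zero2 A) = zero2 B \<and>
     (\<forall>x\<in>car1 A. \<forall>y\<in>car1 A. h1 (add1 A x y) = add1 B (h1 x) (h1 y)) \<and>
     (\<forall>x\<in>car1 A. h1 (neg1 A x) = neg1 B (h1 x)) \<and>
     (\<forall>c. \<forall>x\<in>car1 A. h1 (smul1 A c x) = smul1 B c (h1 x)) \<and>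
     (\<forall>x\<in>car1 A. \<forall>y\<in>car1 A. h1 (brk A x y) = brk B (h1 x) (h1 y)) \<and>
     (\<forall>u\<in>car2 A. \<forall>v\<in>car2 A. h2 (add2 A u v) = add2 B (h2 u) (h2 v)) \<and>
     (\<forall>u\<in>car2 A. h2 (neg2 A u) = neg2 B (h2 u)) \<and>
     (\<forall>c. \<forall>u\<in>car2 A. h2 (smul2 A c u) = smul2 B c (h2 u)) \<and>
     (\<forall>x\<in>car1 A. \<forall>u\<in>car2 A. h2 (act A x u) = act B (h1 x) (h2 u))"

lemma ishomD:
  assumes "ishom A B h1 h2"
  shows "h1 (zero1 A) = zero1 B" "h2 (zero2 A) = zero2 B"
     "\<forall>x\<in>car1 A. \<forall>y\<in>car1 A. h1 (add1 A x y) = add1 B (h1 x) (h1 y)"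
     "\<forall>x\<in>car1 A. h1 (neg1 A x) = neg1 B (h1 x)"
     "\<forall>x\<in>car1 A. h1 (smul1 A c x) = smul1 B c (h1 x)"
     "\<forall>x\<in>car1 A. \<forall>y\<in>car1 A. h1 (brk A x y) = brk B (h1 x) (h1 y)"
     "\<forall>u\<in>car2 A. \<forall>v\<in>car2 A. h2 (add2 A u v) = add2 B (h2 u) (h2 v)"
     "\<forall>u\<in>car2 A. h2 (neg2 A u) = neg2 B (h2 u)"
     "\<forall>u\<in>car2 A. h2 (smul2 A c u) = smul2 B c (h2 u)"
     "\<forall>x\<in>car1 A. \<forall>u\<in>car2 A. h2 (act A x u) = act B (h1 x) (h2 u)"
  using assms unfolding ishom_def by blast+

lemma rep_iso_ishom: "rep_iso A B \<longleftrightarrow> (\<exists>h1 h2. bij_betw h1 (car1 A) (car1 B) \<and> bij_betw h2 (car2 A) (car2 B) \<and> ishom A B h1 h2)"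
  unfolding rep_iso_def ishom_def by simp

lemma inv_op2:
  assumes h: "bij_betw h A B" and k: "bij_betw k C D"
    and cl: "\<forall>x\<in>A. \<forall>u\<in>C. f x u \<in> C" and hm: "\<forall>x\<in>A. \<forall>u\<in>C. k (f x u) = f' (h x) (k u)"
    and X: "X \<in> B" and U: "U \<in> D"
  shows "inv_into C k (f' X U) = f (inv_into A h X) (inv_into C k U)"
proof -
  have a: "inv_into A h X \<in> A" "h (inv_into A h X) = X"
    using h X by (auto intro: inv_into_into f_inv_into_f simp: bij_betw_def)
  have b: "inv_into C k U \<in> C" "k (inv_into C k U) = U"
    using k U by (auto intro: inv_into_into f_inv_into_f simp: bij_betw_def)
  have "f' X U = k (f (inv_into A h X) (inv_into C k U))" using hm a b by simp
  thus ?thesis using cl a b k by (simp add: bij_betw_def inv_into_f_f)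
qed

lemma inv_op1:
  assumes h: "bij_betw h A B"
    and cl: "\<forall>x\<in>A. f x \<in> A" and hm: "\<forall>x\<in>A. h (f x) = f' (h x)"
    and X: "X \<in> B"
  shows "inv_into A h (f' X) = f (inv_into A h X)"
proof -
  have a: "inv_into A h X \<in> A" "h (inv_into A h X) = X"
    using h X by (auto intro: inv_into_into f_inv_into_f simp: bij_betw_def)
  have "f' X = h (f (inv_into A h X))" using hm a by simp
  thus ?thesis using cl a h by (simp add: bij_betw_def inv_into_f_f)
qed

lemma inv_op0:
  assumes h: "bij_betw h A B" and "z \<in> A" "h z = z'"
  shows "inv_into A h z' = z"
  using assms by (auto simp: bij_betw_def inv_into_f_f)

lemma lin_alg_bound:
  fixes C M :: "nat \<Rightarrow> nat \<Rightarrow> 'k::field"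
  assumes h: "\<And>i j. i < p \<Longrightarrow> j < p \<Longrightarrow> (\<Sum>l<q. C i l * M l j) = (if i = j then 1 else 0)"
  shows "p \<le> q"
proof (rule ccontr)
  assume "\<not> p \<le> q" hence qp: "q < p" by simp
  define C' where "C' = mat p p (\<lambda>(i,l). if l < q then C i l else (0::'k))"
  define M' where "M' = mat p p (\<lambda>(l,j). if l < q then M l j else (0::'k))"
  have CM: "C' * M' = 1\<^sub>m p"
  proof (rule eq_matI)
    fix i j assume ij: "i < dim_row (1\<^sub>m p)" "j < dim_col (1\<^sub>m p)"
    have "(C' * M') $$ (i,j) = (\<Sum>l<p. C' $$ (i,l) * M' $$ (l,j))"
      using ij by (simp add: C'_def M'_def scalar_prod_def lessThan_atLeast0 times_mat_def)
    also have "\<dots> = (\<Sum>l<p. if l < q then C i l * M l j else 0)"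
      using ij by (intro sum.cong) (auto simp: C'_def M'_def)
    also have "\<dots> = (\<Sum>l\<in>{..<p} \<inter> {l. l < q}. C i l * M l j)"
      by (simp add: sum.inter_restrict)
    also have "{..<p} \<inter> {l. l < q} = {..<q}" using qp by auto
    finally show "(C' * M') $$ (i,j) = 1\<^sub>m p $$ (i,j)" using ij h by simp
  qed (auto simp: C'_def M'_def)
  have "det M' = 0"
  proof -
    { fix f assume f: "f permutes {0..<p}"
      have "(\<Prod>i\<in>{0..<p}. if i < q then M i (f i) else 0) = (0::'k)"
        by (rule prod_zero[OF _ bexI[of _ q]]) (insert qp f, auto)
    }
    thus ?thesis unfolding det_def M'_def by (auto intro!: sum.neutral)
  qed
  moreover have "det (C' * M') = det C' * det M'"
    by (rule det_mult) (auto simp: C'_def M'_def)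
  ultimately show False using CM by simp
qed

context fixes E1 :: "('k::field tm1 \<times> 'k tm1) set" and E2 :: "('k tm2 \<times> 'k tm2) set"
  assumes nd: "nondegenerate E1 E2"
begin

lemma cls1_eq: "ident1 E1 E2 a b \<Longrightarrow> cls1 E1 E2 a = cls1 E1 E2 b"
  unfolding cls1_def by (auto intro: trans1 sym1)
lemma cls2_eq: "ident2 E1 E2 a b \<Longrightarrow> cls2 E1 E2 a = cls2 E1 E2 b"
  unfolding cls2_def by (auto intro: trans2 sym2)
lemma some1: "ident1 E1 E2 (SOME x. x \<in> cls1 E1 E2 t) t"
proof -
  have "t \<in> cls1 E1 E2 t" by (simp add: cls1_def refl1)
  hence "(SOME x. x \<in> cls1 E1 E2 t) \<in> cls1 E1 E2 t" by (rule someI)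
  thus ?thesis by (simp add: cls1_def)
qed
lemma some2: "ident2 E1 E2 (SOME x. x \<in> cls2 E1 E2 t) t"
proof -
  have "t \<in> cls2 E1 E2 t" by (simp add: cls2_def refl2)
  hence "(SOME x. x \<in> cls2 E1 E2 t) \<in> cls2 E1 E2 t" by (rule someI)
  thus ?thesis by (simp add: cls2_def)
qed

lemma Coef1_cls[simp]: "Coef1 (cls1 E1 E2 t) = coef1 t"
  unfolding Coef1_def using coef_inv[OF nd] some1 by blast
lemma Coef2_cls[simp]: "Coef2 (cls2 E1 E2 t) = coef2 t"
  unfolding Coef2_def using coef_inv[OF nd] some2 by blast

abbreviation "FA m n \<equiv> free_alg E1 E2 m n"

lemma ops1:
  "zero1 (FA m n) = cls1 E1 E2 Zero1"
  "add1 (FA m n) (cls1 E1 E2 a) (cls1 E1 E2 b) = cls1 E1 E2 (Add1 a b)"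
  "neg1 (FA m n) (cls1 E1 E2 a) = cls1 E1 E2 (Neg1 a)"
  "smul1 (FA m n) c (cls1 E1 E2 a) = cls1 E1 E2 (Smul1 c a)"
  "brk (FA m n) (cls1 E1 E2 a) (cls1 E1 E2 b) = cls1 E1 E2 (Br a b)"
  by (auto simp: free_alg_def intro!: cls1_eq cAdd1 cNeg1 cSmul1 cBr some1)

lemma ops2:
  "zero2 (FA m n) = cls2 E1 E2 Zero2"
  "add2 (FA m n) (cls2 E1 E2 u) (cls2 E1 E2 v) = cls2 E1 E2 (Add2 u v)"
  "neg2 (FA m n) (cls2 E1 E2 u) = cls2 E1 E2 (Neg2 u)"
  "smul2 (FA m n) c (cls2 E1 E2 u) = cls2 E1 E2 (Smul2 c u)"
  "act (FA m n) (cls1 E1 E2 a) (cls2 E1 E2 u) = cls2 E1 E2 (Act a u)"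
  by (auto simp: free_alg_def intro!: cls2_eq cAdd2 cNeg2 cSmul2 cAct some1 some2)

lemma Coef_ops:
  "Coef1 (zero1 (FA m n)) = (\<lambda>j. 0)"
  "Coef1 (add1 (FA m n) X Y) = (\<lambda>j. Coef1 X j + Coef1 Y j)"
  "Coef1 (neg1 (FA m n) X) = (\<lambda>j. - Coef1 X j)"
  "Coef1 (smul1 (FA m n) c X) = (\<lambda>j. c * Coef1 X j)"
  "Coef1 (brk (FA m n) X Y) = (\<lambda>j. 0)"
  "Coef2 (zero2 (FA m n)) = (\<lambda>j. 0)"
  "Coef2 (add2 (FA m n) U V) = (\<lambda>j. Coef2 U j + Coef2 V j)"
  "Coef2 (neg2 (FA m n) U) = (\<lambda>j. - Coef2 U j)"
  "Coef2 (smul2 (FA m n) c U) = (\<lambda>j. c * Coef2 U j)"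
  "Coef2 (act (FA m n) X U) = (\<lambda>j. 0)"
  by (simp_all add: free_alg_def Coef1_def[of X] Coef1_def[of Y] Coef2_def[of U] Coef2_def[of V])

lemma car1_iff: "X \<in> car1 (FA m n) \<longleftrightarrow> (\<exists>t. X = cls1 E1 E2 t \<and> vars1 t \<subseteq> {..<m})"
  by (auto simp: free_alg_def)
lemma car2_iff: "U \<in> car2 (FA m n) \<longleftrightarrow> (\<exists>t. U = cls2 E1 E2 t \<and> vars21 t \<subseteq> {..<m} \<and> vars22 t \<subseteq> {..<n})"
  by (auto simp: free_alg_def)

end


context fixes E1 :: "('k::field tm1 \<times> 'k tm1) set" and E2 :: "('k tm2 \<times> 'k tm2) set"
  assumes nd: "nondegenerate E1 E2"
begin

lemma mem1: "vars1 t \<subseteq> {..<m} \<Longrightarrow> cls1 E1 E2 t \<in> car1 (free_alg E1 E2 m n)"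
  by (auto simp: free_alg_def)
lemma mem2: "vars21 t \<subseteq> {..<m} \<Longrightarrow> vars22 t \<subseteq> {..<n} \<Longrightarrow> cls2 E1 E2 t \<in> car2 (free_alg E1 E2 m n)"
  by (auto simp: free_alg_def)

lemma lin1:
  assumes H: "ishom (free_alg E1 E2 m n) (free_alg E1 E2 m' n') h1 h2"
  shows "vars1 t \<subseteq> {..<m} \<Longrightarrow>
    Coef1 (h1 (cls1 E1 E2 t)) j = (\<Sum>i<m. coef1 t i * Coef1 (h1 (cls1 E1 E2 (V1 i))) j)"
proof (induction t)
  case (V1 i)
  thus ?case by (simp add: sum_delta_mul)
next
  case Zero1
  have "h1 (cls1 E1 E2 Zero1) = zero1 (free_alg E1 E2 m' n')"
    using ishomD(1)[OF H] ops1(1)[OF nd, of m n] by simp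
  thus ?case using Coef_ops(1)[OF nd] by simp
next
  case (Add1 a b)
  have "h1 (cls1 E1 E2 (Add1 a b)) = add1 (free_alg E1 E2 m' n') (h1 (cls1 E1 E2 a)) (h1 (cls1 E1 E2 b))"
    using H Add1.prems ops1(2)[OF nd, of m n a b, symmetric] mem1[of a m n] mem1[of b m n]
    by (simp add: ishomD[OF H])
  thus ?case using Add1 Coef_ops(2)[OF nd] by (simp add: sum.distrib distrib_right)
next
  case (Neg1 a)
  have "h1 (cls1 E1 E2 (Neg1 a)) = neg1 (free_alg E1 E2 m' n') (h1 (cls1 E1 E2 a))"
    using H Neg1.prems ops1(3)[OF nd, of m n a, symmetric] mem1[of a m n]
    by (simp add: ishomD[OF H])
  thus ?case using Neg1 Coef_ops(3)[OF nd] by (simp add: sum_negf)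
next
  case (Smul1 c a)
  have "h1 (cls1 E1 E2 (Smul1 c a)) = smul1 (free_alg E1 E2 m' n') c (h1 (cls1 E1 E2 a))"
    using H Smul1.prems ops1(4)[OF nd, of m n c a, symmetric] mem1[of a m n]
    by (simp add: ishomD[OF H])
  thus ?case using Smul1 Coef_ops(4)[OF nd] by (simp add: sum_distrib_left mult.assoc)
next
  case (Br a b)
  have "h1 (cls1 E1 E2 (Br a b)) = brk (free_alg E1 E2 m' n') (h1 (cls1 E1 E2 a)) (h1 (cls1 E1 E2 b))"
    using H Br.prems ops1(5)[OF nd, of m n a b, symmetric] mem1[of a m n] mem1[of b m n]
    by (simp add: ishomD[OF H])
  thus ?case using Coef_ops(5)[OF nd] by simp
qed

lemma lin2:
  assumes H: "ishom (free_alg E1 E2 m n) (free_alg E1 E2 m' n') h1 h2"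
  shows "vars21 t \<subseteq> {..<m} \<Longrightarrow> vars22 t \<subseteq> {..<n} \<Longrightarrow>
    Coef2 (h2 (cls2 E1 E2 t)) j = (\<Sum>i<n. coef2 t i * Coef2 (h2 (cls2 E1 E2 (V2 i))) j)"
proof (induction t)
  case (V2 i)
  thus ?case by (simp add: sum_delta_mul)
next
  case Zero2
  have "h2 (cls2 E1 E2 Zero2) = zero2 (free_alg E1 E2 m' n')"
    using ishomD(2)[OF H] ops2(1)[OF nd, of m n] by simp
  thus ?case using Coef_ops(6)[OF nd] by simp
next
  case (Add2 a b)
  have "h2 (cls2 E1 E2 (Add2 a b)) = add2 (free_alg E1 E2 m' n') (h2 (cls2 E1 E2 a)) (h2 (cls2 E1 E2 b))"
    using H Add2.prems ops2(2)[OF nd, of m n a b, symmetric] mem2[of a m n] mem2[of b m n]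
    by (simp add: ishomD[OF H])
  thus ?case using Add2 Coef_ops(7)[OF nd] by (simp add: sum.distrib distrib_right)
next
  case (Neg2 a)
  have "h2 (cls2 E1 E2 (Neg2 a)) = neg2 (free_alg E1 E2 m' n') (h2 (cls2 E1 E2 a))"
    using H Neg2.prems ops2(3)[OF nd, of m n a, symmetric] mem2[of a m n]
    by (simp add: ishomD[OF H])
  thus ?case using Neg2 Coef_ops(8)[OF nd] by (simp add: sum_negf)
next
  case (Smul2 c a)
  have "h2 (cls2 E1 E2 (Smul2 c a)) = smul2 (free_alg E1 E2 m' n') c (h2 (cls2 E1 E2 a))"
    using H Smul2.prems ops2(4)[OF nd, of m n c a, symmetric] mem2[of a m n]
    by (simp add: ishomD[OF H])
  thus ?case using Smul2 Coef_ops(9)[OF nd] by (simp add: sum_distrib_left mult.assoc)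
next
  case (Act a b)
  have "h2 (cls2 E1 E2 (Act a b)) = act (free_alg E1 E2 m' n') (h1 (cls1 E1 E2 a)) (h2 (cls2 E1 E2 b))"
    using H Act.prems ops2(5)[OF nd, of m n a b, symmetric] mem1[of a m n] mem2[of b m n]
    by (simp add: ishomD[OF H])
  thus ?case using Coef_ops(10)[OF nd] by simp
qed

lemma bound1:
  assumes H: "ishom (free_alg E1 E2 m n) (free_alg E1 E2 m' n') h1 h2"
    and S: "car1 (free_alg E1 E2 m' n') \<subseteq> h1 ` car1 (free_alg E1 E2 m n)"
  shows "m' \<le> m"
proof -
  have ex: "\<exists>t. vars1 t \<subseteq> {..<m} \<and> h1 (cls1 E1 E2 t) = cls1 E1 E2 (V1 i)" if "i < m'" for i
  proof -
    have "cls1 E1 E2 (V1 i) \<in> car1 (free_alg E1 E2 m' n')" using that by (intro mem1) auto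
    then obtain X where X: "X \<in> car1 (free_alg E1 E2 m n)" "h1 X = cls1 E1 E2 (V1 i)" using S by blast
    from X(1) obtain t where "X = cls1 E1 E2 t" "vars1 t \<subseteq> {..<m}" unfolding car1_iff[OF nd] by blast
    thus ?thesis using X(2) by blast
  qed
  define T where "T i = (SOME t. vars1 t \<subseteq> {..<m} \<and> h1 (cls1 E1 E2 t) = cls1 E1 E2 (V1 i))" for i
  have T: "vars1 (T i) \<subseteq> {..<m} \<and> h1 (cls1 E1 E2 (T i)) = cls1 E1 E2 (V1 i)" if "i < m'" for i
    unfolding T_def by (rule someI_ex, rule ex[OF that])
  show ?thesis
  proof (rule lin_alg_bound[where C = "\<lambda>i l. coef1 (T i) l" and M = "\<lambda>l j. Coef1 (h1 (cls1 E1 E2 (V1 l))) j"])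
    fix i j assume "i < m'" "j < m'"
    have "(if i = j then 1 else 0) = Coef1 (h1 (cls1 E1 E2 (T i))) j"
      using T[OF \<open>i < m'\<close>] Coef1_cls[OF nd] by simp
    also have "\<dots> = (\<Sum>l<m. coef1 (T i) l * Coef1 (h1 (cls1 E1 E2 (V1 l))) j)"
      by (rule lin1[OF H], use T[OF \<open>i < m'\<close>] in blast)
    finally show "(\<Sum>l<m. coef1 (T i) l * Coef1 (h1 (cls1 E1 E2 (V1 l))) j) = (if i = j then 1 else 0)" by simp
  qed
qed

lemma bound2:
  assumes H: "ishom (free_alg E1 E2 m n) (free_alg E1 E2 m' n') h1 h2"
    and S: "car2 (free_alg E1 E2 m' n') \<subseteq> h2 ` car2 (free_alg E1 E2 m n)"
  shows "n' \<le> n"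
proof -
  have ex: "\<exists>t. (vars21 t \<subseteq> {..<m} \<and> vars22 t \<subseteq> {..<n}) \<and> h2 (cls2 E1 E2 t) = cls2 E1 E2 (V2 i)" if "i < n'" for i
  proof -
    have "cls2 E1 E2 (V2 i) \<in> car2 (free_alg E1 E2 m' n')" using that by (intro mem2) auto
    then obtain X where X: "X \<in> car2 (free_alg E1 E2 m n)" "h2 X = cls2 E1 E2 (V2 i)" using S by blast
    from X(1) obtain t where "X = cls2 E1 E2 t" "vars21 t \<subseteq> {..<m}" "vars22 t \<subseteq> {..<n}"
      unfolding car2_iff[OF nd] by blast
    thus ?thesis using X(2) by blast
  qed
  define T where "T i = (SOME t. (vars21 t \<subseteq> {..<m} \<and> vars22 t \<subseteq> {..<n}) \<and> h2 (cls2 E1 E2 t) = cls2 E1 E2 (V2 i))" for i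
  have T: "(vars21 (T i) \<subseteq> {..<m} \<and> vars22 (T i) \<subseteq> {..<n}) \<and> h2 (cls2 E1 E2 (T i)) = cls2 E1 E2 (V2 i)" if "i < n'" for i
    unfolding T_def by (rule someI_ex, rule ex[OF that])
  show ?thesis
  proof (rule lin_alg_bound[where C = "\<lambda>i l. coef2 (T i) l" and M = "\<lambda>l j. Coef2 (h2 (cls2 E1 E2 (V2 l))) j"])
    fix i j assume "i < n'" "j < n'"
    have "(if i = j then 1 else 0) = Coef2 (h2 (cls2 E1 E2 (T i))) j"
      using T[OF \<open>i < n'\<close>] Coef2_cls[OF nd] by simp
    also have "\<dots> = (\<Sum>l<n. coef2 (T i) l * Coef2 (h2 (cls2 E1 E2 (V2 l))) j)"
      using T[OF \<open>i < n'\<close>] by (intro lin2[OF H]) auto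
    finally show "(\<Sum>l<n. coef2 (T i) l * Coef2 (h2 (cls2 E1 E2 (V2 l))) j) = (if i = j then 1 else 0)" by simp
  qed
qed

end


lemma car1E:
  fixes E1 :: "('k::field tm1 \<times> 'k tm1) set" and E2 :: "('k tm2 \<times> 'k tm2) set"
  assumes "X \<in> car1 (free_alg E1 E2 m n)"
  obtains t where "X = cls1 E1 E2 t" "vars1 t \<subseteq> {..<m}"
  using assms by (auto simp: free_alg_def)
lemma car2E:
  fixes E1 :: "('k::field tm1 \<times> 'k tm1) set" and E2 :: "('k tm2 \<times> 'k tm2) set"
  assumes "X \<in> car2 (free_alg E1 E2 m n)"
  obtains t where "X = cls2 E1 E2 t" "vars21 t \<subseteq> {..<m}" "vars22 t \<subseteq> {..<n}"
  using assms by (auto simp: free_alg_def)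

lemma inv_ishom:
  fixes E1 :: "('k::field tm1 \<times> 'k tm1) set" and E2 :: "('k tm2 \<times> 'k tm2) set"
  assumes nd: "nondegenerate E1 E2"
    and b1: "bij_betw h1 (car1 (free_alg E1 E2 m n)) (car1 (free_alg E1 E2 m' n'))"
    and b2: "bij_betw h2 (car2 (free_alg E1 E2 m n)) (car2 (free_alg E1 E2 m' n'))"
    and H: "ishom (free_alg E1 E2 m n) (free_alg E1 E2 m' n') h1 h2"
  shows "ishom (free_alg E1 E2 m' n') (free_alg E1 E2 m n)
     (inv_into (car1 (free_alg E1 E2 m n)) h1) (inv_into (car2 (free_alg E1 E2 m n)) h2)"
proof -
  let ?F = "free_alg E1 E2 m n"
  have c1: "\<forall>x\<in>car1 ?F. \<forall>y\<in>car1 ?F. add1 ?F x y \<in> car1 ?F"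
           "\<forall>x\<in>car1 ?F. neg1 ?F x \<in> car1 ?F"
           "\<forall>x\<in>car1 ?F. smul1 ?F c x \<in> car1 ?F"
           "\<forall>x\<in>car1 ?F. \<forall>y\<in>car1 ?F. brk ?F x y \<in> car1 ?F"
           "zero1 ?F \<in> car1 ?F" for c
    by (auto simp: ops1[OF nd] elim!: car1E intro!: mem1[OF nd]) blast+
  have c2: "\<forall>x\<in>car2 ?F. \<forall>y\<in>car2 ?F. add2 ?F x y \<in> car2 ?F"
           "\<forall>x\<in>car2 ?F. neg2 ?F x \<in> car2 ?F"
           "\<forall>x\<in>car2 ?F. smul2 ?F c x \<in> car2 ?F"
           "\<forall>x\<in>car1 ?F. \<forall>y\<in>car2 ?F. act ?F x y \<in> car2 ?F"
           "zero2 ?F \<in> car2 ?F" for c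
    by (auto simp: ops1[OF nd] ops2[OF nd] elim!: car1E car2E intro!: mem2[OF nd]) blast+
  show ?thesis unfolding ishom_def
    apply (intro conjI ballI allI)
    subgoal using inv_op0[OF b1 c1(5) ishomD(1)[OF H]] by blast
    subgoal using inv_op0[OF b2 c2(5) ishomD(2)[OF H]] by blast
    subgoal for x y by (rule inv_op2[OF b1 b1 c1(1) ishomD(3)[OF H]]) auto
    subgoal for x by (rule inv_op1[OF b1 c1(2) ishomD(4)[OF H]]) auto
    subgoal for c x by (rule inv_op1[OF b1 c1(3)[of c] ishomD(5)[OF H]]) auto
    subgoal for x y by (rule inv_op2[OF b1 b1 c1(4) ishomD(6)[OF H]]) auto
    subgoal for x y by (rule inv_op2[OF b2 b2 c2(1) ishomD(7)[OF H]]) auto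
    subgoal for x by (rule inv_op1[OF b2 c2(2) ishomD(8)[OF H]]) auto
    subgoal for c x by (rule inv_op1[OF b2 c2(3)[of c] ishomD(9)[OF H]]) auto
    subgoal for x y by (rule inv_op2[OF b1 b2 c2(4) ishomD(10)[OF H]]) auto
    done
qed

theorem mainTheorem19:
  fixes E1 :: "('k::field tm1 \<times> 'k tm1) set" and E2 :: "('k tm2 \<times> 'k tm2) set"
  assumes "nondegenerate E1 E2"
  shows "IBN_variety E1 E2"
  unfolding IBN_variety_def
proof (intro allI impI)
  fix m n m' n'
  assume "rep_iso (free_alg E1 E2 m n) (free_alg E1 E2 m' n')"
  then obtain h1 h2 where b1: "bij_betw h1 (car1 (free_alg E1 E2 m n)) (car1 (free_alg E1 E2 m' n'))"
    and b2: "bij_betw h2 (car2 (free_alg E1 E2 m n)) (car2 (free_alg E1 E2 m' n'))"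
    and H: "ishom (free_alg E1 E2 m n) (free_alg E1 E2 m' n') h1 h2"
    unfolding rep_iso_ishom by blast
  have H': "ishom (free_alg E1 E2 m' n') (free_alg E1 E2 m n)
     (inv_into (car1 (free_alg E1 E2 m n)) h1) (inv_into (car2 (free_alg E1 E2 m n)) h2)"
    by (rule inv_ishom[OF assms b1 b2 H])
  have g1: "bij_betw (inv_into (car1 (free_alg E1 E2 m n)) h1) (car1 (free_alg E1 E2 m' n')) (car1 (free_alg E1 E2 m n))"
    by (rule bij_betw_inv_into[OF b1])
  have g2: "bij_betw (inv_into (car2 (free_alg E1 E2 m n)) h2) (car2 (free_alg E1 E2 m' n')) (car2 (free_alg E1 E2 m n))"
    by (rule bij_betw_inv_into[OF b2])
  have "m' \<le> m" by (rule bound1[OF assms H]) (use b1 in \<open>simp add: bij_betw_def\<close>)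
  moreover have "n' \<le> n" by (rule bound2[OF assms H]) (use b2 in \<open>simp add: bij_betw_def\<close>)
  moreover have "m \<le> m'" by (rule bound1[OF assms H']) (use g1 in \<open>simp add: bij_betw_def\<close>)
  moreover have "n \<le> n'" by (rule bound2[OF assms H']) (use g2 in \<open>simp add: bij_betw_def\<close>)
  ultimately show "m = m' \<and> n = n'" by simp
qed


end
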